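(* Let $A$ be a finite alphabet and $d: A^n \to A$ a block map. Then $d$ is regressive if and only if the induced sliding block code $\tau_d: A^{\mathbb{N}} \to A^{\mathbb{N}}$ $*$-commutes with the shift map $\sigma$.
   Context: $A$ is a finite set; $\mathbb{N}=\{1,2,3,\dots\}$; $A^{\mathbb{N}}$ is the set of one-sided infinite sequences $x=x_1x_2\cdots$ over $A$; $\sigma(x_1x_2x_3\cdots)=x_2x_3\cdots$. A block map is a function $d: A^n \to A$, and $\tau_d: A^{\mathbb{N}}\to A^{\mathbb{N}}$ is defined by $\tau_d(x)_i = d(x_i \cdots x_{i+n-1})$. The block map $d$ is regressive if for each fixed $x_1 \cdots x_{n-1} \in A^{n-1}$ the function $A\to A$, $a\mapsto d(a x_1 \cdots x_{n-1})$, is bijective. Two functions $S,T: X\to X$ on a set $X$ $*$-commute if $ST=TS$ and for every $(y,z)\in X\times X$ with $S(y)=T(z)$ there exists a unique $x\in X$ with $T(x)=y$ and $S(x)=z$. *)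

theory Defs
  imports Main
begin

text \<open>One-sided sequences x_1 x_2 ... over A are modelled as functions nat => 'a
  (index shifted to start at 0). Words in A^n are lists of length n.\<close>

definition shift :: "(nat \<Rightarrow> 'a) \<Rightarrow> (nat \<Rightarrow> 'a)" where
  "shift x = (\<lambda>i. x (Suc i))"

definition tau :: "nat \<Rightarrow> ('a list \<Rightarrow> 'a) \<Rightarrow> (nat \<Rightarrow> 'a) \<Rightarrow> (nat \<Rightarrow> 'a)" where
  "tau n d x = (\<lambda>i. d (map (\<lambda>j. x (i + j)) [0..<n]))"

definition regressive :: "nat \<Rightarrow> ('a list \<Rightarrow> 'a) \<Rightarrow> bool" where
  "regressive n d \<longleftrightarrow> (\<forall>w. length w = n - 1 \<longrightarrow> bij (\<lambda>a. d (a # w)))"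

definition star_commute :: "('b \<Rightarrow> 'b) \<Rightarrow> ('b \<Rightarrow> 'b) \<Rightarrow> bool" where
  "star_commute S T \<longleftrightarrow> S \<circ> T = T \<circ> S \<and>
     (\<forall>y z. S y = T z \<longrightarrow> (\<exists>!x. T x = y \<and> S x = z))"

end

theory Submission
  imports Defs
begin

lemma tau_Suc: "tau n d x (Suc i) = tau n d (shift x) i"
  by (simp add: tau_def shift_def)

lemma tau_0:
  assumes "n \<ge> 1"
  shows "tau n d x 0 = d (x 0 # map (shift x) [0..<n-1])"
proof -
  have "[0..<n] = 0 # map Suc [0..<n-1]"
    using assms by (cases n) (auto simp: upt_conv_Cons map_Suc_upt)
  thus ?thesis by (simp add: tau_def shift_def o_def)
qed

lemma comm: "tau n d \<circ> shift = shift \<circ> tau n d"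
  by (rule ext) (simp add: tau_def shift_def fun_eq_iff)

definition cons_seq :: "'a \<Rightarrow> (nat \<Rightarrow> 'a) \<Rightarrow> nat \<Rightarrow> 'a" where
  "cons_seq a y = (\<lambda>i. case i of 0 \<Rightarrow> a | Suc j \<Rightarrow> y j)"

lemma shift_cons[simp]: "shift (cons_seq a y) = y"
  by (simp add: shift_def cons_seq_def)

lemma cons_0[simp]: "cons_seq a y 0 = a"
  by (simp add: cons_seq_def)

lemma shift_eq: "shift x = y \<Longrightarrow> x = cons_seq (x 0) y"
  by (auto simp: shift_def cons_seq_def fun_eq_iff split: nat.split)

theorem theorem4p9:
  fixes d :: "'a::finite list \<Rightarrow> 'a" and n :: nat
  assumes "n \<ge> 1"
  shows "regressive n d \<longleftrightarrow> star_commute (tau n d) shift"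
proof
  assume R: "regressive n d"
  show "star_commute (tau n d) shift"
    unfolding star_commute_def
  proof (intro conjI allI impI comm)
    fix y z :: "nat \<Rightarrow> 'a"
    assume yz: "tau n d y = shift z"
    define w where "w = map y [0..<n-1]"
    have b: "bij (\<lambda>a. d (a # w))" using R unfolding regressive_def w_def by simp
    then obtain a where a: "d (a # w) = z 0" unfolding bij_def surj_def by (metis (no_types))
    have ok: "tau n d (cons_seq a' y) = z \<longleftrightarrow> d (a' # w) = z 0" for a'
    proof
      assume "tau n d (cons_seq a' y) = z"
      then show "d (a' # w) = z 0" using tau_0[OF assms, of d "cons_seq a' y"] by (simp add: w_def)
    next
      assume h: "d (a' # w) = z 0"
      show "tau n d (cons_seq a' y) = z"
      proof
        fix i show "tau n d (cons_seq a' y) i = z i"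
        proof (cases i)
          case 0 then show ?thesis using h tau_0[OF assms, of d "cons_seq a' y"] by (simp add: w_def)
        next
          case (Suc j) then show ?thesis using yz tau_Suc[of n d "cons_seq a' y" j]
            by (simp only: shift_cons) (simp add: shift_def fun_eq_iff)
        qed
      qed
    qed
    show "\<exists>!x. shift x = y \<and> tau n d x = z"
    proof
      show "shift (cons_seq a y) = y \<and> tau n d (cons_seq a y) = z" using ok a by simp
    next
      fix x assume x: "shift x = y \<and> tau n d x = z"
      then obtain a0 where xe: "x = cons_seq a0 y" using shift_eq by blast
      hence "d (a0 # w) = z 0" using ok[of a0] x by simp
      hence "a0 = a" using a b unfolding bij_def inj_def by simp
      thus "x = cons_seq a y" using xe by simp
    qed
  qed
next
  assume S: "star_commute (tau n d) shift"
  hence U: "\<And>y z. tau n d y = shift z \<Longrightarrow> \<exists>!x. shift x = y \<and> tau n d x = z"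
    unfolding star_commute_def by blast
  show "regressive n d" unfolding regressive_def
  proof (intro allI impI)
    fix w :: "'a list" assume lw: "length w = n - 1"
    define y where "y = (\<lambda>i. w ! i)"
    have wy: "map y [0..<n-1] = w" using lw by (simp add: y_def list_eq_iff_nth_eq)
    define zz where "zz b = cons_seq b (tau n d y)" for b
    have yz: "tau n d y = shift (zz b)" for b unfolding zz_def by (rule shift_cons[symmetric])
    have key: "tau n d (cons_seq a y) = zz b \<longleftrightarrow> d (a # w) = b" for a b
    proof
      assume "tau n d (cons_seq a y) = zz b"
      then show "d (a # w) = b" using tau_0[OF assms, of d "cons_seq a y"] wy
        by (simp add: zz_def)
    next
      assume h: "d (a # w) = b"
      show "tau n d (cons_seq a y) = zz b"
      proof
        fix i show "tau n d (cons_seq a y) i = zz b i"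
        proof (cases i)
          case 0 then show ?thesis using h tau_0[OF assms, of d "cons_seq a y"] wy by (simp add: zz_def)
        next
          case (Suc j) then show ?thesis using tau_Suc[of n d "cons_seq a y" j]
            by (simp only: shift_cons) (simp add: zz_def cons_seq_def)
        qed
      qed
    qed
    show "bij (\<lambda>a. d (a # w))"
      unfolding bij_def inj_def surj_def
    proof (intro conjI allI impI)
      fix b :: 'a
      obtain x where x: "shift x = y" "tau n d x = zz b" using U[OF yz, of b] by (elim ex1E) blast
      then obtain a0 where "x = cons_seq a0 y" using shift_eq by blast
      hence "d (a0 # w) = b" using key[of a0 b] x by simp
      thus "\<exists>a. b = d (a # w)" by (intro exI[of _ a0]) simp
    next
      fix a a' assume e: "d (a # w) = d (a' # w)"
      have h1: "tau n d (cons_seq a y) = zz (d (a # w))" using key[of a "d (a # w)"] by simp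
      have h2: "tau n d (cons_seq a' y) = zz (d (a # w))" using key[of a' "d (a # w)"] e by simp
      have s1: "shift (cons_seq a y) = y" "shift (cons_seq a' y) = y" by simp_all
      have "cons_seq a y = cons_seq a' y" 
      proof -
        from U[OF yz, of "d (a # w)"] obtain x0 where
          x0: "\<And>x. shift x = y \<and> tau n d x = zz (d (a # w)) \<Longrightarrow> x = x0"
          by (elim ex1E) blast
        have "cons_seq a y = x0" by (rule x0) (simp add: h1)
        moreover have "cons_seq a' y = x0" by (rule x0) (simp add: h2)
        ultimately show ?thesis by simp
      qed
      thus "a = a'" by (metis cons_0)
    qed
  qed
qed

end
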